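(* Let $\mu$ be a probability distribution on $Q_d$ and let $X\in Q_d$ with $|X|=k\ge1$ and $P_1(X,\mathbf 0)>\frac12$. Let $I=\{i: x_i=1\}$. Then there exists $i\in I$ with \[ w_i^0<\begin{cases}\frac34-\frac1{4k} & \text{if $k$ is odd},\\[2pt] \frac34-\frac1{2k} & \text{if $k$ is even}.\end{cases} \]
   Context: $Q_d=\{0,1\}^d$ with the Hamming distance $d(X,Y)=|\{i: x_i\neq y_i\}|$; $|X|$ is the number of coordinates of $X$ equal to $1$. A probability distribution on $Q_d$ is a function $\mu:Q_d\to\mathbb R_{\ge0}$ with $\sum_{V\in Q_d}\mu(V)=1$, extended to subsets by $\mu(\mathcal A)=\sum_{V\in\mathcal A}\mu(V)$. For $A,B\in Q_d$ let $V(A,B)=\{Z\in Q_d: d(Z,A)<d(Z,B)\}$ and $T(A,B)=\{Z\in Q_d: d(Z,A)=d(Z,B)\}$, and $P_1(A,B)=\mu(V(A,B))+\frac12\mu(T(A,B))$. For $i\in[d]$, $w_i^0=\mu(\{Z\in Q_d: z_i=0\})$. $\mathbf 0=(0,\dots,0)$. *)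

theory Defs
  imports Complex_Main
begin

text \<open>The hypercube Q_d: 0/1 vectors of length d, represented as bool lists
  (True = 1). Coordinates are indexed by 0..d-1.\<close>
definition cube :: "nat \<Rightarrow> bool list set" where
  "cube d = {X. length X = d}"

definition hdist :: "bool list \<Rightarrow> bool list \<Rightarrow> nat" where
  "hdist X Y = card {i. i < length X \<and> X ! i \<noteq> Y ! i}"

definition weight :: "bool list \<Rightarrow> nat" where
  "weight X = card {i. i < length X \<and> X ! i}"

definition zero_vec :: "nat \<Rightarrow> bool list" where
  "zero_vec d = replicate d False"

definition is_distribution :: "nat \<Rightarrow> (bool list \<Rightarrow> real) \<Rightarrow> bool" where
  "is_distribution d \<mu> \<longleftrightarrow> (\<forall>V\<in>cube d. \<mu> V \<ge> 0) \<and> (\<Sum>V\<in>cube d. \<mu> V) = 1"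

definition meas :: "(bool list \<Rightarrow> real) \<Rightarrow> bool list set \<Rightarrow> real" where
  "meas \<mu> A = (\<Sum>V\<in>A. \<mu> V)"

definition vor :: "nat \<Rightarrow> bool list \<Rightarrow> bool list \<Rightarrow> bool list set" where
  "vor d A B = {Z\<in>cube d. hdist Z A < hdist Z B}"

definition tie :: "nat \<Rightarrow> bool list \<Rightarrow> bool list \<Rightarrow> bool list set" where
  "tie d A B = {Z\<in>cube d. hdist Z A = hdist Z B}"

definition P1 :: "nat \<Rightarrow> (bool list \<Rightarrow> real) \<Rightarrow> bool list \<Rightarrow> bool list \<Rightarrow> real" where
  "P1 d \<mu> A B = meas \<mu> (vor d A B) + meas \<mu> (tie d A B) / 2"

definition w0 :: "nat \<Rightarrow> (bool list \<Rightarrow> real) \<Rightarrow> nat \<Rightarrow> real" where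
  "w0 d \<mu> i = meas \<mu> {Z\<in>cube d. \<not> Z ! i}"

end

theory Submission
  imports Defs
begin

lemma finite_cube: "finite (cube d)"
proof -
  have "cube d = {xs. set xs \<subseteq> (UNIV::bool set) \<and> length xs = d}"
    by (auto simp: cube_def)
  thus ?thesis using finite_lists_length_eq[of "UNIV::bool set" d] by simp
qed

lemma hd_key:
  assumes "length Z = d" "length X = d"
  shows "hdist Z X + card {i. i<d \<and> X!i \<and> Z!i} = hdist Z (zero_vec d) + card {i. i<d \<and> X!i \<and> \<not> Z!i}"
proof -
  let ?P = "{i. i<d \<and> Z!i \<and> \<not> X!i}"
  let ?Q = "{i. i<d \<and> \<not> Z!i \<and> X!i}"
  let ?R = "{i. i<d \<and> X!i \<and> Z!i}"
  have h1: "{i. i < length Z \<and> Z!i \<noteq> X!i} = ?P \<union> ?Q" using assms by auto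
  have h2: "{i. i < length Z \<and> Z!i \<noteq> zero_vec d ! i} = ?P \<union> ?R"
    using assms by (auto simp: zero_vec_def)
  have "hdist Z X = card ?P + card ?Q" unfolding hdist_def h1
    by (subst card_Un_disjoint) auto
  moreover have "hdist Z (zero_vec d) = card ?P + card ?R" unfolding hdist_def h2
    by (subst card_Un_disjoint) auto
  moreover have "?Q = {i. i<d \<and> X!i \<and> \<not> Z!i}" by auto
  ultimately show ?thesis by simp
qed

lemma split_k:
  "card {i. i<d \<and> X!i \<and> Z!i} + card {i. i<d \<and> X!i \<and> \<not> Z!i} = card {i. i<d \<and> X!i}"
proof -
  have "{i. i<d \<and> X!i} = {i. i<d \<and> X!i \<and> Z!i} \<union> {i. i<d \<and> X!i \<and> \<not> Z!i}" by auto
  thus ?thesis by (simp add: card_Un_disjoint[symmetric]) (subst card_Un_disjoint; auto)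
qed

theorem mainTheorem3:
  fixes d k :: nat and \<mu> :: "bool list \<Rightarrow> real" and X :: "bool list"
  assumes "is_distribution d \<mu>"
    and "X \<in> cube d"
    and "weight X = k" and "k \<ge> 1"
    and "P1 d \<mu> X (zero_vec d) > 1/2"
  shows "\<exists>i<d. X ! i \<and>
           w0 d \<mu> i < (if odd k then 3/4 - 1/(4 * real k) else 3/4 - 1/(2 * real k))"
proof (rule ccontr)
  define B where "B = (if odd k then 3/4 - 1/(4 * real k) else 3/4 - 1/(2 * real k))"
  define \<alpha> where "\<alpha> = (if odd k then 2/(real k + 1) else 2/(real k + 2))"
  define I where "I = {i. i<d \<and> X!i}"
  define N where "N Z = card {i. i<d \<and> X!i \<and> Z!i}" for Z
  assume "\<not> ?thesis"
  hence wB: "\<And>i. i \<in> I \<Longrightarrow> w0 d \<mu> i \<ge> B" unfolding B_def I_def by fastforce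
  have lenX: "length X = d" using assms(2) by (simp add: cube_def)
  have cardI: "card I = k" using assms(3) lenX by (simp add: weight_def I_def)
  have fin: "finite (cube d)" by (rule finite_cube)
  have mu0: "\<And>Z. Z \<in> cube d \<Longrightarrow> \<mu> Z \<ge> 0" and mu1: "(\<Sum>Z\<in>cube d. \<mu> Z) = 1"
    using assms(1) by (auto simp: is_distribution_def)
  have NI: "\<And>Z. N Z + card {i. i<d \<and> X!i \<and> \<not> Z!i} = k"
    using split_k cardI unfolding N_def I_def by metis
  have vor_iff: "\<And>Z. Z \<in> cube d \<Longrightarrow> (hdist Z X < hdist Z (zero_vec d)) = (k < 2 * N Z)"
  proof -
    fix Z assume "Z \<in> cube d"
    hence "length Z = d" by (simp add: cube_def)
    from hd_key[OF this lenX] NI[of Z] show "?thesis Z" unfolding N_def by linarith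
  qed
  have tie_iff: "\<And>Z. Z \<in> cube d \<Longrightarrow> (hdist Z X = hdist Z (zero_vec d)) = (k = 2 * N Z)"
  proof -
    fix Z assume "Z \<in> cube d"
    hence "length Z = d" by (simp add: cube_def)
    from hd_key[OF this lenX] NI[of Z] show "?thesis Z" unfolding N_def by linarith
  qed
  define g where "g Z = (if k < 2 * N Z then 1 else if k = 2 * N Z then 1/2 else (0::real))" for Z
  have P1eq: "P1 d \<mu> X (zero_vec d) = (\<Sum>Z\<in>cube d. \<mu> Z * g Z)"
  proof -
    have "meas \<mu> (vor d X (zero_vec d)) = (\<Sum>Z\<in>cube d. if k < 2 * N Z then \<mu> Z else 0)"
      unfolding meas_def vor_def using fin vor_iff
      by (simp add: sum.inter_filter[symmetric]) (intro sum.cong; auto)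
    moreover have "meas \<mu> (tie d X (zero_vec d)) = (\<Sum>Z\<in>cube d. if k = 2 * N Z then \<mu> Z else 0)"
      unfolding meas_def tie_def using fin tie_iff
      by (simp add: sum.inter_filter[symmetric]) (intro sum.cong; auto)
    ultimately have "P1 d \<mu> X (zero_vec d) = (\<Sum>Z\<in>cube d. (if k < 2 * N Z then \<mu> Z else 0) + (if k = 2 * N Z then \<mu> Z else 0) / 2)"
      unfolding P1_def by (simp add: sum_divide_distrib sum.distrib)
    also have "\<dots> = (\<Sum>Z\<in>cube d. \<mu> Z * g Z)"
      unfolding g_def by (rule sum.cong) simp_all
    finally show ?thesis .
  qed
  have gb: "\<And>Z. g Z \<le> \<alpha> * real (N Z)"
  proof -
    fix Z
    have k1: "real k \<ge> 1" using assms(4) by simp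
    show "g Z \<le> \<alpha> * real (N Z)"
    proof (cases "odd k")
      case True
      then obtain j where j: "k = 2*j+1" by (metis oddE)
      show ?thesis
      proof (cases "k < 2 * N Z")
        case True
        hence "N Z \<ge> j + 1" using j by linarith
        hence "real (N Z) \<ge> real j + 1" by simp
        thus ?thesis using True j \<open>odd k\<close> by (simp add: g_def \<alpha>_def field_simps)
      next
        case False
        thus ?thesis using j \<open>odd k\<close> by (auto simp: g_def \<alpha>_def)
      qed
    next
      case False
      then obtain j where j: "k = 2*j" by (metis evenE)
      have j1: "j \<ge> 1" using j assms(4) by linarith
      show ?thesis
      proof (cases "k < 2 * N Z")
        case True
        hence "N Z \<ge> j + 1" using j by linarith
        hence "real (N Z) \<ge> real j + 1" by simp
        thus ?thesis using True j \<open>\<not> odd k\<close> by (simp add: g_def \<alpha>_def field_simps)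
      next
        case F2: False
        show ?thesis
        proof (cases "k = 2 * N Z")
          case True
          hence "N Z = j" using j by linarith
          thus ?thesis using True j j1 \<open>\<not> odd k\<close> by (simp add: g_def \<alpha>_def field_simps)
        next
          case False
          thus ?thesis using F2 \<open>\<not> odd k\<close> by (simp add: g_def \<alpha>_def)
        qed
      qed
    qed
  qed
  have a0: "\<alpha> \<ge> 0" by (simp add: \<alpha>_def)
  have "P1 d \<mu> X (zero_vec d) \<le> (\<Sum>Z\<in>cube d. \<alpha> * (\<mu> Z * real (N Z)))"
    unfolding P1eq
  proof (rule sum_mono)
    fix Z assume "Z \<in> cube d"
    from mult_left_mono[OF gb[of Z] mu0[OF this]] show "\<mu> Z * g Z \<le> \<alpha> * (\<mu> Z * real (N Z))"
      by (simp add: algebra_simps)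
  qed
  also have "\<dots> = \<alpha> * (\<Sum>Z\<in>cube d. \<mu> Z * real (N Z))" by (simp add: sum_distrib_left)
  also have "(\<Sum>Z\<in>cube d. \<mu> Z * real (N Z)) = (\<Sum>i\<in>I. meas \<mu> {Z\<in>cube d. Z!i})"
  proof -
    have "\<And>Z. real (N Z) = (\<Sum>i\<in>I. of_bool (Z!i))"
      unfolding N_def I_def by (simp add: Collect_conj_eq[symmetric] conj_assoc)
    hence "(\<Sum>Z\<in>cube d. \<mu> Z * real (N Z)) = (\<Sum>Z\<in>cube d. \<Sum>i\<in>I. \<mu> Z * of_bool (Z!i))"
      by (simp add: sum_distrib_left)
    also have "\<dots> = (\<Sum>i\<in>I. \<Sum>Z\<in>cube d. \<mu> Z * of_bool (Z!i))" by (rule sum.swap)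
    also have "\<dots> = (\<Sum>i\<in>I. meas \<mu> {Z\<in>cube d. Z!i})"
    proof (intro sum.cong refl)
      fix i
      have e: "cube d \<inter> {Z. Z!i} = {Z\<in>cube d. Z!i}" by blast
      show "(\<Sum>Z\<in>cube d. \<mu> Z * of_bool (Z!i)) = meas \<mu> {Z\<in>cube d. Z!i}"
        unfolding meas_def using sum_mult_of_bool_eq[OF fin, of \<mu> "\<lambda>Z. Z!i"] e by simp
    qed
    finally show ?thesis .
  qed
  also have "(\<Sum>i\<in>I. meas \<mu> {Z\<in>cube d. Z!i}) \<le> (\<Sum>i\<in>I. 1 - B)"
  proof (rule sum_mono)
    fix i assume iI: "i \<in> I"
    have "meas \<mu> {Z\<in>cube d. Z!i} + w0 d \<mu> i = 1"
    proof -
      have "meas \<mu> {Z\<in>cube d. Z!i} + w0 d \<mu> i = (\<Sum>Z\<in>cube d. (if Z!i then \<mu> Z else 0) + (if \<not> Z!i then \<mu> Z else 0))"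
        unfolding w0_def meas_def sum.inter_filter[OF fin] sum.distrib ..
      also have "\<dots> = (\<Sum>Z\<in>cube d. \<mu> Z)" by (rule sum.cong) simp_all
      finally show ?thesis using mu1 by simp
    qed
    thus "meas \<mu> {Z\<in>cube d. Z!i} \<le> 1 - B" using wB[OF iI] by linarith
  qed
  finally have "P1 d \<mu> X (zero_vec d) \<le> \<alpha> * (real k * (1 - B))"
    using a0 cardI by (simp add: mult_left_mono)
  also have "\<alpha> * (real k * (1 - B)) = 1/2"
  proof -
    have kp: "real k > 0" using assms(4) by simp
    show ?thesis
    proof (cases "odd k")
      case True
      have "\<alpha> * (real k * (1 - B)) = 2/(real k + 1) * (real k * (1/4 + 1/(4 * real k)))"
        using True by (simp add: \<alpha>_def B_def)
      also have "real k * (1/4 + 1/(4 * real k)) = (real k + 1)/4" using kp by (simp add: field_simps)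
      finally show ?thesis using kp by simp
    next
      case False
      have "\<alpha> * (real k * (1 - B)) = 2/(real k + 2) * (real k * (1/4 + 1/(2 * real k)))"
        using False by (simp add: \<alpha>_def B_def)
      also have "real k * (1/4 + 1/(2 * real k)) = (real k + 2)/4" using kp by (simp add: field_simps)
      finally show ?thesis using kp by simp
    qed
  qed
  finally show False using assms(5) by simp
qed

end
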